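(* Consider heteroskedastic Gaussian bandits with arms $\{1,\dots,p\}$, true means $\beta_0=(\beta_{0,1},\dots,\beta_{0,p})$ and known variances $\sigma_1^2,\dots,\sigma_p^2>0$. For each $n$, an independent trajectory $H^n_{m_n}=((a^n_1,y^n_1),\dots,(a^n_{m_n},y^n_{m_n}))$ is generated by: $a^n_j\sim\Lambda^n(\cdot\mid H^n_{j-1})$ (a distribution on $\{1,\dots,p\}$ depending on the past), then $y^n_j\sim\mathcal{N}(\beta_{0,a^n_j},\sigma^2_{a^n_j})$ conditionally on the past and $a^n_j$. Let $N_{i,n}=\sum_{j=1}^{m_n}\mathbf{1}[a^n_j=i]$ and let $\hat\beta_n$ be the vector of per-arm sample means $\hat\beta_{n,i}=N_{i,n}^{-1}\sum_{j}\mathbf{1}[a^n_j=i]y^n_j$. Assume: (i) $\min_iN_{i,n}\xrightarrow{p}\infty$; (ii) the prior $\pi$ is a continuous and bounded density on $\mathbb{R}^p$ with $\pi(\beta_0)>0$. Then $$\big\|\pi(\cdot\mid H^n_{m_n})-\mathcal{N}\big(\hat\beta_n,\mathrm{diag}(\sigma_i^2N_{i,n}^{-1})\big)\big\|_{\mathrm{TV}}\xrightarrow{p}0.$$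
   Context: The sampling rules $\Lambda^n$ may depend on $n$, while $\beta_0$, the $\sigma_i^2$ and $\pi$ do not. The posterior is $\pi(\beta\mid H^n_{m_n})\propto\pi(\beta)\prod_{j=1}^{m_n}\exp\big(-(y^n_j-\beta_{a^n_j})^2/(2\sigma^2_{a^n_j})\big)$. $\|\cdot\|_{\mathrm{TV}}$ is total variation distance. *)

theory Defs
  imports "HOL-Probability.Probability"
begin

text \<open>Histories of length j: functions nat => arm x reward, extensional on {..<j}.\<close>
definition hist_space :: "nat \<Rightarrow> (nat \<Rightarrow> 'p \<times> real) measure" where
  "hist_space j = PiM {..<j} (\<lambda>_. count_space UNIV \<Otimes>\<^sub>M borel)"

text \<open>Law of the trajectory H_j generated by the adaptive sampling rule L
  (L j h = distribution of the arm a_(j+1) given the past h of length j),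
  true means b0 and standard deviations sd (variances sd i ^ 2).\<close>
primrec traj :: "(nat \<Rightarrow> (nat \<Rightarrow> 'p \<times> real) \<Rightarrow> 'p pmf) \<Rightarrow> ('p \<Rightarrow> real) \<Rightarrow> ('p \<Rightarrow> real)
    \<Rightarrow> nat \<Rightarrow> (nat \<Rightarrow> 'p \<times> real) measure" where
  "traj L b0 sd 0 = return (hist_space 0) (\<lambda>_. undefined)"
| "traj L b0 sd (Suc j) = traj L b0 sd j \<bind> (\<lambda>h. measure_pmf (L j h) \<bind>
      (\<lambda>a. distr (density lborel (normal_density (b0 a) (sd a))) (hist_space (Suc j))
             (\<lambda>y. h(j := (a, y)))))"

definition arm_count :: "nat \<Rightarrow> (nat \<Rightarrow> 'p \<times> real) \<Rightarrow> 'p \<Rightarrow> nat" where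
  "arm_count m h i = card {j. j < m \<and> fst (h j) = i}"

definition sample_mean :: "nat \<Rightarrow> (nat \<Rightarrow> 'p \<times> real) \<Rightarrow> 'p \<Rightarrow> real" where
  "sample_mean m h i = (\<Sum>j<m. if fst (h j) = i then snd (h j) else 0) / real (arm_count m h i)"

definition likelihood :: "('p \<Rightarrow> real) \<Rightarrow> nat \<Rightarrow> (nat \<Rightarrow> 'p \<times> real) \<Rightarrow> real^'p \<Rightarrow> real" where
  "likelihood sd m h \<beta> = (\<Prod>j<m. exp (- (snd (h j) - \<beta> $ fst (h j))\<^sup>2 / (2 * (sd (fst (h j)))\<^sup>2)))"

definition posterior :: "(real^'p \<Rightarrow> real) \<Rightarrow> ('p \<Rightarrow> real) \<Rightarrow> nat \<Rightarrow> (nat \<Rightarrow> 'p \<times> real)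
    \<Rightarrow> (real^'p) measure" where
  "posterior prior sd m h =
     density lborel (\<lambda>\<beta>. ennreal (prior \<beta> * likelihood sd m h \<beta>
        / (\<integral>b. prior b * likelihood sd m h b \<partial>lborel)))"

definition gauss_approx :: "('p::finite \<Rightarrow> real) \<Rightarrow> nat \<Rightarrow> (nat \<Rightarrow> 'p \<times> real) \<Rightarrow> (real^'p) measure" where
  "gauss_approx sd m h =
     density lborel (\<lambda>x. ennreal (\<Prod>i\<in>UNIV. normal_density (sample_mean m h i)
        (sd i / sqrt (real (arm_count m h i))) (x $ i)))"

definition tv_dist :: "'a measure \<Rightarrow> 'a measure \<Rightarrow> real" where
  "tv_dist M N = (SUP A \<in> sets M. \<bar>measure M A - measure N A\<bar>)"

end

theory Submission
  imports Defs
begin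


definition kern :: "(nat \<Rightarrow> (nat \<Rightarrow> 'p \<times> real) \<Rightarrow> 'p pmf) \<Rightarrow> ('p \<Rightarrow> real) \<Rightarrow> ('p \<Rightarrow> real)
    \<Rightarrow> nat \<Rightarrow> (nat \<Rightarrow> 'p \<times> real) \<Rightarrow> (nat \<Rightarrow> 'p \<times> real) measure" where
  "kern L mu sd j h = measure_pmf (L j h) \<bind>
      (\<lambda>a. distr (density lborel (normal_density (mu a) (sd a))) (hist_space (Suc j))
             (\<lambda>y. h(j := (a, y))))"

lemma traj_Suc: "traj L mu sd (Suc j) = traj L mu sd j \<bind> kern L mu sd j"
  by (simp add: kern_def[abs_def])

lemma pmf_kern_meas:
  fixes L :: "(nat \<Rightarrow> 'p::finite \<times> real) \<Rightarrow> 'p pmf"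
  assumes "\<And>a. (\<lambda>h. pmf (L h) a) \<in> borel_measurable M"
  shows "(\<lambda>h. measure_pmf (L h)) \<in> M \<rightarrow>\<^sub>M prob_algebra (count_space UNIV)"
proof (rule measurable_prob_algebraI)
  show "prob_space (measure_pmf (L x))" for x by (rule prob_space_measure_pmf)
  show "(\<lambda>h. measure_pmf (L h)) \<in> M \<rightarrow>\<^sub>M subprob_algebra (count_space UNIV)"
  proof (rule measurable_subprob_algebra)
    fix A :: "'p set"
    have "(\<lambda>h. emeasure (measure_pmf (L h)) A) = (\<lambda>h. ennreal (\<Sum>s\<in>A. pmf (L h) s))"
      by (subst emeasure_measure_pmf_finite) (auto simp: sum_ennreal)
    moreover have "(\<lambda>h. ennreal (\<Sum>s\<in>A. pmf (L h) s)) \<in> borel_measurable M"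
      using assms by measurable
    ultimately show "(\<lambda>h. emeasure (measure_pmf (L h)) A) \<in> borel_measurable M" by simp
  qed (auto simp: subprob_space_measure_pmf)
qed

lemma upd_meas:
  assumes "h \<in> space (hist_space j)" and that: "sets M = sets borel"
  shows "(\<lambda>y. h(j := (a, y))) \<in> M \<rightarrow>\<^sub>M hist_space (Suc j)"
  unfolding hist_space_def
  by (rule measurable_fun_upd[where J="{..<j}"]) (use that assms in \<open>auto simp: hist_space_def\<close>)

lemma G_meas:
  assumes sd: "\<And>i. sd i > 0"
  shows "(\<lambda>h. distr (density lborel (normal_density (mu a) (sd a))) (hist_space (Suc j)) (\<lambda>y. h(j := (a, y))))
      \<in> hist_space j \<rightarrow>\<^sub>M prob_algebra (hist_space (Suc j))"
proof -
  let ?N = "\<lambda>a. density lborel (normal_density (mu a) (sd a))"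
  show ?thesis
  proof (rule measurable_prob_algebraI)
    show "prob_space (distr (?N a) (hist_space (Suc j)) (\<lambda>y. h(j := (a, y))))"
      if "h \<in> space (hist_space j)" for h
    proof (rule prob_space.prob_space_distr)
      show "prob_space (?N a)" by (rule prob_space_normal_density[OF sd])
      show "(\<lambda>y. h(j := (a, y))) \<in> ?N a \<rightarrow>\<^sub>M hist_space (Suc j)"
        by (rule upd_meas[OF that]) simp
    qed
    show "(\<lambda>h. distr (?N a) (hist_space (Suc j)) (\<lambda>y. h(j := (a, y))))
      \<in> hist_space j \<rightarrow>\<^sub>M subprob_algebra (hist_space (Suc j))"
    proof (rule measurable_distr2[where M="?N a"])
      show "(\<lambda>(h, y). h(j := (a, y))) \<in> hist_space j \<Otimes>\<^sub>M ?N a \<rightarrow>\<^sub>M hist_space (Suc j)"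
        unfolding hist_space_def split_beta'
        by (rule measurable_fun_upd[where J="{..<j}"]) auto
      show "(\<lambda>x. ?N a) \<in> hist_space j \<rightarrow>\<^sub>M subprob_algebra (?N a)"
        by (rule measurable_const)
          (auto simp: space_subprob_algebra intro!: prob_space_imp_subprob_space prob_space_normal_density sd)
    qed
  qed
qed

lemma kern_meas:
  fixes L :: "nat \<Rightarrow> (nat \<Rightarrow> 'p::finite \<times> real) \<Rightarrow> 'p pmf"
  assumes sd: "\<And>i. sd i > 0"
    and Lm: "\<And>a. (\<lambda>h. pmf (L j h) a) \<in> borel_measurable (hist_space j)"
  shows "kern L mu sd j \<in> hist_space j \<rightarrow>\<^sub>M prob_algebra (hist_space (Suc j))"
  unfolding kern_def
proof (rule measurable_bind_prob_space2[where N="count_space UNIV"])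
  show "(\<lambda>h. measure_pmf (L j h)) \<in> hist_space j \<rightarrow>\<^sub>M prob_algebra (count_space UNIV)"
    by (rule pmf_kern_meas[OF Lm])
  let ?N = "\<lambda>a. density lborel (normal_density (mu a) (sd a))"
  have fix_a: "(\<lambda>h. distr (?N a) (hist_space (Suc j)) (\<lambda>y. h(j := (a, y))))
      \<in> hist_space j \<rightarrow>\<^sub>M prob_algebra (hist_space (Suc j))" for a
    by (rule G_meas[OF sd])
  show "(\<lambda>(h, a). distr (?N a) (hist_space (Suc j)) (\<lambda>y. h(j := (a, y))))
      \<in> hist_space j \<Otimes>\<^sub>M count_space UNIV \<rightarrow>\<^sub>M prob_algebra (hist_space (Suc j))"
    unfolding split_beta'
    by (rule measurable_compose_countable'[where g=snd and I=UNIV,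
          OF measurable_compose[OF measurable_fst fix_a]]) auto
qed


lemma traj_space:
  fixes L :: "nat \<Rightarrow> (nat \<Rightarrow> 'p::finite \<times> real) \<Rightarrow> 'p pmf"
  assumes sd: "\<And>i. sd i > 0"
    and Lm: "\<And>j a. (\<lambda>h. pmf (L j h) a) \<in> borel_measurable (hist_space j)"
  shows "traj L mu sd j \<in> space (prob_algebra (hist_space j))"
proof (induction j)
  case 0
  have "(\<lambda>_. undefined) \<in> space (hist_space 0)"
    by (simp add: hist_space_def space_PiM)
  then show ?case
    by (auto simp: space_prob_algebra intro: prob_space_return)
next
  case (Suc j)
  show ?case
    unfolding traj_Suc
    using measurable_bind_prob_space[OF measurable_const[OF Suc] kern_meas[where L=L and sd=sd and mu=mu and j=j, OF sd Lm],
        THEN measurable_space, of undefined "count_space UNIV"]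
    by simp
qed

lemma traj_prob: 
  fixes L :: "nat \<Rightarrow> (nat \<Rightarrow> 'p::finite \<times> real) \<Rightarrow> 'p pmf"
  assumes sd: "\<And>i. sd i > 0"
    and Lm: "\<And>j a. (\<lambda>h. pmf (L j h) a) \<in> borel_measurable (hist_space j)"
  shows "prob_space (traj L mu sd j)" "sets (traj L mu sd j) = sets (hist_space j)"
    "space (traj L mu sd j) = space (hist_space j)"
  using traj_space[where mu=mu and j=j and sd=sd and L=L, OF sd Lm]
  by (auto simp: space_prob_algebra intro!: sets_eq_imp_space_eq)

lemma hist_comp_meas:
  "k < j \<Longrightarrow> (\<lambda>h. h k) \<in> hist_space j \<rightarrow>\<^sub>M count_space UNIV \<Otimes>\<^sub>M borel"
  unfolding hist_space_def by (rule measurable_component_singleton) auto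

definition Zf :: "'p \<Rightarrow> ('p \<Rightarrow> real) \<Rightarrow> ('p \<Rightarrow> real) \<Rightarrow> real \<Rightarrow> nat \<Rightarrow> (nat \<Rightarrow> 'p \<times> real) \<Rightarrow> real" where
  "Zf i mu sd l j h = exp (\<Sum>k<j. if fst (h k) = i then l * (snd (h k) - mu i) - l^2 * (sd i)^2 / 2 else 0)"

lemma Zf_meas: "(\<lambda>h. Zf i mu sd l j h) \<in> borel_measurable (hist_space j)"
proof -
  have [measurable]: "(\<lambda>h. h k) \<in> hist_space j \<rightarrow>\<^sub>M count_space UNIV \<Otimes>\<^sub>M borel" if "k \<in> {..<j}" for k
    using hist_comp_meas that by auto
  have "(\<lambda>h. \<Sum>k<j. if fst (h k) = i then l * (snd (h k) - mu i) - l^2 * (sd i)^2 / 2 else 0)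
     \<in> borel_measurable (hist_space j)"
    by (rule borel_measurable_sum) measurable
  then show ?thesis unfolding Zf_def by measurable
qed


lemma normal_tilt:
  assumes s: "s > 0"
  shows "normal_density b s y * exp (l * (y - b) - l^2 * s^2 / 2) = normal_density (b + l * s^2) s y"
proof -
  have "exp (-(y - b)\<^sup>2 / (2 * s\<^sup>2)) * exp (l * (y - b) - l^2 * s^2 / 2)
      = exp (-(y - (b + l * s^2))\<^sup>2 / (2 * s\<^sup>2))"
    unfolding exp_add[symmetric] using s
    by (intro arg_cong[where f=exp]) (simp add: field_simps power2_eq_square)
  then show ?thesis unfolding normal_density_def by (simp add: mult.assoc)
qed

lemma nn_normal:
  assumes s: "s > 0"
  shows "(\<integral>\<^sup>+y. ennreal (normal_density m s y) \<partial>lborel) = 1"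
  using s by (subst nn_integral_eq_integral) auto

lemma Zf_upd:
  "Zf i mu sd l (Suc j) (h(j := (a, y))) =
     Zf i mu sd l j h * (if a = i then exp (l * (y - mu i) - l^2 * (sd i)^2 / 2) else 1)"
  unfolding Zf_def
  apply (simp add: exp_add)
  apply (intro arg_cong[where f=exp] sum.cong)
   apply auto
  done

lemma Zf_integral:
  fixes L :: "nat \<Rightarrow> (nat \<Rightarrow> 'p::finite \<times> real) \<Rightarrow> 'p pmf"
  assumes sd: "\<And>i. sd i > 0"
    and Lm: "\<And>j a. (\<lambda>h. pmf (L j h) a) \<in> borel_measurable (hist_space j)"
  shows "(\<integral>\<^sup>+h. ennreal (Zf i mu sd l j h) \<partial>traj L mu sd j) = 1"
proof (induction j)
  case 0
  have "(\<lambda>_. undefined) \<in> space (hist_space 0)"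
    by (simp add: hist_space_def space_PiM)
  then show ?case
    by (simp add: nn_integral_return Zf_def indicator_def)
next
  case (Suc j)
  have kmeas: "kern L mu sd j \<in> traj L mu sd j \<rightarrow>\<^sub>M subprob_algebra (hist_space (Suc j))"
    using measurable_prob_algebraD[OF kern_meas[where L=L and sd=sd and mu=mu and j=j, OF sd Lm]]
    by (simp add: measurable_cong_sets[OF traj_prob(2)[OF sd Lm] refl])
  have Zm: "(\<lambda>h. ennreal (Zf i mu sd l (Suc j) h)) \<in> borel_measurable (hist_space (Suc j))"
    using Zf_meas by measurable
  have inner: "(\<integral>\<^sup>+x. ennreal (Zf i mu sd l (Suc j) x) \<partial>kern L mu sd j h) = ennreal (Zf i mu sd l j h)"
    if h: "h \<in> space (hist_space j)" for h
  proof -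
    let ?G = "\<lambda>a. distr (density lborel (normal_density (mu a) (sd a))) (hist_space (Suc j)) (\<lambda>y. h(j := (a, y)))"
    have Gsp: "?G a \<in> space (subprob_algebra (hist_space (Suc j)))" for a
      using measurable_space[OF measurable_prob_algebraD[OF G_meas[where sd=sd and mu=mu and a=a and j=j, OF sd]] h]
      by simp
    have "(\<integral>\<^sup>+x. ennreal (Zf i mu sd l (Suc j) x) \<partial>kern L mu sd j h)
        = (\<integral>\<^sup>+a. \<integral>\<^sup>+x. ennreal (Zf i mu sd l (Suc j) x) \<partial>?G a \<partial>measure_pmf (L j h))"
      unfolding kern_def
      by (rule nn_integral_bind[OF Zm]) (use Gsp in auto)
    also have "\<dots> = (\<integral>\<^sup>+a. ennreal (Zf i mu sd l j h) \<partial>measure_pmf (L j h))"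
    proof (rule nn_integral_cong)
      fix a
      have um: "(\<lambda>y. h(j := (a, y))) \<in> density lborel (normal_density (mu a) (sd a)) \<rightarrow>\<^sub>M hist_space (Suc j)"
        by (rule upd_meas[OF h]) simp
      have um2: "(\<lambda>y. h(j := (a, y))) \<in> borel \<rightarrow>\<^sub>M hist_space (Suc j)"
        by (rule upd_meas[OF h]) simp
      have "(\<integral>\<^sup>+x. ennreal (Zf i mu sd l (Suc j) x) \<partial>?G a)
          = (\<integral>\<^sup>+y. ennreal (Zf i mu sd l (Suc j) (h(j := (a, y)))) \<partial>density lborel (normal_density (mu a) (sd a)))"
        by (rule nn_integral_distr[OF um]) (use Zm in simp)
      also have "\<dots> = (\<integral>\<^sup>+y. ennreal (normal_density (mu a) (sd a) y) * ennreal (Zf i mu sd l (Suc j) (h(j := (a, y)))) \<partial>lborel)"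
        by (rule nn_integral_density) (use um2 Zm in auto)
      also have "\<dots> = (\<integral>\<^sup>+y. ennreal (Zf i mu sd l j h) * ennreal (if a = i then normal_density (mu a + l * (sd a)^2) (sd a) y else normal_density (mu a) (sd a) y) \<partial>lborel)"
      proof (rule nn_integral_cong)
        fix y
        have "normal_density (mu a) (sd a) y * Zf i mu sd l (Suc j) (h(j:=(a,y)))
           = Zf i mu sd l j h * (if a = i then normal_density (mu a + l * (sd a)^2) (sd a) y else normal_density (mu a) (sd a) y)"
          by (cases "a = i") (simp_all add: Zf_upd normal_tilt[OF sd, symmetric] mult_ac)
        moreover have "Zf i mu sd l j h \<ge> 0" "Zf i mu sd l (Suc j) (h(j:=(a,y))) \<ge> 0"
          by (simp_all add: Zf_def)
        ultimately show "ennreal (normal_density (mu a) (sd a) y) * ennreal (Zf i mu sd l (Suc j) (h(j:=(a,y))))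
           = ennreal (Zf i mu sd l j h) * ennreal (if a = i then normal_density (mu a + l * (sd a)^2) (sd a) y else normal_density (mu a) (sd a) y)"
          by (simp add: ennreal_mult[symmetric])
      qed
      also have "\<dots> = ennreal (Zf i mu sd l j h)"
        by (subst nn_integral_cmult) (cases "a = i"; simp add: nn_normal[OF sd])+
      finally show "(\<integral>\<^sup>+x. ennreal (Zf i mu sd l (Suc j) x) \<partial>?G a) = ennreal (Zf i mu sd l j h)" .
    qed
    also have "\<dots> = ennreal (Zf i mu sd l j h)"
      by (simp add: measure_pmf.emeasure_space_1)
    finally show ?thesis .
  qed
  have "(\<integral>\<^sup>+h. ennreal (Zf i mu sd l (Suc j) h) \<partial>traj L mu sd (Suc j))
      = (\<integral>\<^sup>+h. \<integral>\<^sup>+x. ennreal (Zf i mu sd l (Suc j) x) \<partial>kern L mu sd j h \<partial>traj L mu sd j)"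
    unfolding traj_Suc by (rule nn_integral_bind[OF Zm kmeas])
  also have "\<dots> = (\<integral>\<^sup>+h. ennreal (Zf i mu sd l j h) \<partial>traj L mu sd j)"
    by (rule nn_integral_cong) (simp add: inner traj_prob(3)[OF sd Lm])
  finally show ?case using Suc by simp
qed


definition Ssum :: "nat \<Rightarrow> (nat \<Rightarrow> 'p \<times> real) \<Rightarrow> 'p \<Rightarrow> real" where
  "Ssum m h i = (\<Sum>j<m. if fst (h j) = i then snd (h j) else 0)"

lemma arm_count_sum: "real (arm_count m h i) = (\<Sum>k<m. if fst (h k) = i then 1 else 0)"
proof -
  have "(\<Sum>k<m. if fst (h k) = i then 1 else 0 :: real) = (\<Sum>k\<in>{k\<in>{..<m}. fst (h k) = i}. 1)"
    by (rule sum.inter_filter[symmetric]) simp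
  also have "{k\<in>{..<m}. fst (h k) = i} = {j. j < m \<and> fst (h j) = i}" by auto
  finally show ?thesis by (simp add: arm_count_def)
qed

lemma sample_mean_Ssum: "sample_mean m h i = Ssum m h i / real (arm_count m h i)"
  by (simp add: sample_mean_def Ssum_def)

lemma expo_sum:
  "(\<Sum>k<m. if fst (h k) = i then l * (snd (h k) - b) - c else 0)
     = l * (Ssum m h i - b * real (arm_count m h i)) - c * real (arm_count m h i)"
proof -
  have "(\<Sum>k<m. if fst (h k) = i then l * (snd (h k) - b) - c else 0)
     = (\<Sum>k<m. l * (if fst (h k) = i then snd (h k) else 0) - (l * b + c) * (if fst (h k) = i then 1 else 0))"
    by (intro sum.cong) (auto simp: algebra_simps)
  also have "\<dots> = l * Ssum m h i - (l * b + c) * real (arm_count m h i)"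
    by (simp add: sum_subtractf sum_distrib_left[symmetric] Ssum_def arm_count_sum)
  finally show ?thesis by (simp add: algebra_simps)
qed

lemma meas_stats:
  "(\<lambda>h. real (arm_count m h i)) \<in> borel_measurable (hist_space m)"
  "(\<lambda>h. Ssum m h i) \<in> borel_measurable (hist_space m)"
  "(\<lambda>h. sample_mean m h i) \<in> borel_measurable (hist_space m)"
proof -
  have [measurable]: "(\<lambda>h. h k) \<in> hist_space m \<rightarrow>\<^sub>M count_space UNIV \<Otimes>\<^sub>M borel" if "k \<in> {..<m}" for k
    using hist_comp_meas that by auto
  have a: "(\<lambda>h. \<Sum>k<m. if fst (h k) = i then 1 else 0 :: real) \<in> borel_measurable (hist_space m)"
    by (rule borel_measurable_sum) measurable
  have b: "(\<lambda>h. \<Sum>k<m. if fst (h k) = i then snd (h k) else 0) \<in> borel_measurable (hist_space m)"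
    by (rule borel_measurable_sum) measurable
  show 1: "(\<lambda>h. real (arm_count m h i)) \<in> borel_measurable (hist_space m)"
    using a by (simp add: arm_count_sum)
  show 2: "(\<lambda>h. Ssum m h i) \<in> borel_measurable (hist_space m)"
    using b by (simp add: Ssum_def)
  show "(\<lambda>h. sample_mean m h i) \<in> borel_measurable (hist_space m)"
    unfolding sample_mean_Ssum using 1 2 by measurable
qed

lemma tail_gen:
  fixes L :: "nat \<Rightarrow> (nat \<Rightarrow> 'p::finite \<times> real) \<Rightarrow> 'p pmf"
  assumes sd: "\<And>i. sd i > 0"
    and Lm: "\<And>j a. (\<lambda>h. pmf (L j h) a) \<in> borel_measurable (hist_space j)"
  shows "emeasure (traj L mu sd m) {h \<in> space (traj L mu sd m).
      c \<le> l * (Ssum m h i - mu i * real (arm_count m h i)) - l^2 * (sd i)^2 / 2 * real (arm_count m h i)}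
     \<le> ennreal (exp (- c))"
proof -
  let ?M = "traj L mu sd m"
  let ?A = "{h \<in> space ?M.
      c \<le> l * (Ssum m h i - mu i * real (arm_count m h i)) - l^2 * (sd i)^2 / 2 * real (arm_count m h i)}"
  note sets_eq = traj_prob(2)[OF sd Lm, where mu=mu and j=m]
  have [measurable]: "(\<lambda>h. real (arm_count m h i)) \<in> borel_measurable ?M"
     "(\<lambda>h. Ssum m h i) \<in> borel_measurable ?M"
    using meas_stats by (simp_all add: measurable_cong_sets[OF sets_eq refl])
  have Zm: "(\<lambda>h. ennreal (Zf i mu sd l m h)) \<in> borel_measurable ?M"
  proof -
    have "(\<lambda>h. ennreal (Zf i mu sd l m h)) \<in> borel_measurable (hist_space m)"
      using Zf_meas by measurable
    then show ?thesis by (simp add: measurable_cong_sets[OF sets_eq refl])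
  qed
  have A: "?A \<in> sets ?M" by measurable
  have "emeasure ?M ?A = (\<integral>\<^sup>+h. indicator ?A h \<partial>?M)"
    using A by simp
  also have "\<dots> \<le> (\<integral>\<^sup>+h. ennreal (exp (- c)) * ennreal (Zf i mu sd l m h) \<partial>?M)"
  proof (rule nn_integral_mono)
    fix h assume "h \<in> space ?M"
    show "indicator ?A h \<le> ennreal (exp (- c)) * ennreal (Zf i mu sd l m h)"
    proof (cases "h \<in> ?A")
      case True
      then have "c \<le> (\<Sum>k<m. if fst (h k) = i then l * (snd (h k) - mu i) - l^2 * (sd i)^2 / 2 else 0)"
        by (simp add: expo_sum)
      then have "exp c \<le> Zf i mu sd l m h" unfolding Zf_def by simp
      then have "1 \<le> exp (- c) * Zf i mu sd l m h"
        by (simp add: exp_minus field_simps)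
      then show ?thesis using True
        by (simp add: ennreal_mult[symmetric] Zf_def)
    qed simp
  qed
  also have "\<dots> = ennreal (exp (- c))"
    by (subst nn_integral_cmult) (simp_all add: Zm Zf_integral[OF sd Lm])
  finally show ?thesis .
qed


lemma tail_dev:
  fixes L :: "nat \<Rightarrow> (nat \<Rightarrow> 'p::finite \<times> real) \<Rightarrow> 'p pmf"
  assumes sd: "\<And>i. sd i > 0"
    and Lm: "\<And>j a. (\<lambda>h. pmf (L j h) a) \<in> borel_measurable (hist_space j)"
    and r: "r > 0" and K: "K > 0"
  shows "emeasure (traj L mu sd m) {h \<in> space (traj L mu sd m).
      K \<le> real (arm_count m h i) \<and> r \<le> \<bar>sample_mean m h i - mu i\<bar>}
     \<le> ennreal (2 * exp (- (r^2 * K / (2 * (sd i)^2))))"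
proof -
  let ?M = "traj L mu sd m"
  define c where "c = r^2 * K / (2 * (sd i)^2)"
  define N where "N h = real (arm_count m h i)" for h
  define D where "D h = Ssum m h i - mu i * N h" for h
  define A where "A l = {h \<in> space ?M. c \<le> l * (Ssum m h i - mu i * real (arm_count m h i)) - l^2 * (sd i)^2 / 2 * real (arm_count m h i)}" for l
  note sets_eq = traj_prob(2)[OF sd Lm, where mu=mu and j=m]
  have [measurable]: "(\<lambda>h. real (arm_count m h i)) \<in> borel_measurable ?M"
     "(\<lambda>h. Ssum m h i) \<in> borel_measurable ?M"
    using meas_stats by (simp_all add: measurable_cong_sets[OF sets_eq refl])
  have Ameas: "A l \<in> sets ?M" for l unfolding A_def by measurable
  have sdp: "sd i > 0" by (rule sd)
  have key: "c \<le> l * D h - l^2 * (sd i)^2 / 2 * N h"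
    if lD: "l * D h \<ge> r^2 * N h / (sd i)^2" and l2: "l^2 = r^2 / ((sd i)^2)^2" and NK: "K \<le> N h" for l h
  proof -
    have e1: "l^2 * (sd i)^2 / 2 * N h = r^2 * N h / (2 * (sd i)^2)"
      unfolding l2 using sdp by (simp add: field_simps power2_eq_square)
    have e2: "r^2 * N h / (sd i)^2 - r^2 * N h / (2 * (sd i)^2) = r^2 * N h / (2 * (sd i)^2)"
      using sdp by (simp add: field_simps)
    have "c \<le> r^2 * N h / (2 * (sd i)^2)"
      unfolding c_def using NK sdp r by (intro divide_right_mono mult_left_mono) auto
    also have "\<dots> = r^2 * N h / (sd i)^2 - r^2 * N h / (2 * (sd i)^2)" using e2 by simp
    also have "\<dots> \<le> l * D h - r^2 * N h / (2 * (sd i)^2)" using lD by (rule diff_right_mono)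
    also have "\<dots> = l * D h - l^2 * (sd i)^2 / 2 * N h" using e1 by simp
    finally show ?thesis .
  qed
  have sub: "{h \<in> space ?M. K \<le> real (arm_count m h i) \<and> r \<le> \<bar>sample_mean m h i - mu i\<bar>}
      \<subseteq> A (r / (sd i)^2) \<union> A (- r / (sd i)^2)"
  proof
    fix h assume h: "h \<in> {h \<in> space ?M. K \<le> real (arm_count m h i) \<and> r \<le> \<bar>sample_mean m h i - mu i\<bar>}"
    then have hs: "h \<in> space ?M" and NK: "K \<le> N h" and dev: "r \<le> \<bar>sample_mean m h i - mu i\<bar>"
      by (auto simp: N_def)
    have Npos: "N h > 0" using NK K by linarith
    have Deq: "D h = N h * (sample_mean m h i - mu i)"
      using Npos by (simp add: D_def sample_mean_Ssum N_def[symmetric] field_simps)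
    show "h \<in> A (r / (sd i)^2) \<union> A (- r / (sd i)^2)"
    proof (cases "sample_mean m h i - mu i \<ge> 0")
      case True
      then have "N h * r \<le> D h" using dev Npos unfolding Deq by (intro mult_left_mono) auto
      then have "r / (sd i)^2 * (N h * r) \<le> r / (sd i)^2 * D h"
        using r sdp by (intro mult_left_mono) auto
      then have "r / (sd i)^2 * D h \<ge> r^2 * N h / (sd i)^2" by (simp add: power2_eq_square mult_ac)
      then have "c \<le> r / (sd i)^2 * D h - (r / (sd i)^2)^2 * (sd i)^2 / 2 * N h"
        using NK by (intro key) (auto simp: power_divide)
      then show ?thesis using hs by (simp add: A_def D_def N_def)
    next
      case False
      then have "N h * r \<le> N h * (- (sample_mean m h i - mu i))" using dev Npos by (intro mult_left_mono) auto
      then have "N h * r \<le> - D h" unfolding Deq by (simp add: algebra_simps)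
      then have "r / (sd i)^2 * (N h * r) \<le> r / (sd i)^2 * (- D h)"
        using r sdp by (intro mult_left_mono) auto
      then have "(- r / (sd i)^2) * D h \<ge> r^2 * N h / (sd i)^2" by (simp add: power2_eq_square mult_ac)
      then have "c \<le> (- r / (sd i)^2) * D h - (- r / (sd i)^2)^2 * (sd i)^2 / 2 * N h"
        using NK by (intro key) (auto simp: power_divide)
      then show ?thesis using hs by (simp add: A_def D_def N_def)
    qed
  qed
  have "emeasure ?M {h \<in> space ?M. K \<le> real (arm_count m h i) \<and> r \<le> \<bar>sample_mean m h i - mu i\<bar>}
      \<le> emeasure ?M (A (r / (sd i)^2) \<union> A (- r / (sd i)^2))"
    by (rule emeasure_mono[OF sub]) (use Ameas in auto)
  also have "\<dots> \<le> emeasure ?M (A (r / (sd i)^2)) + emeasure ?M (A (- r / (sd i)^2))"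
    by (rule emeasure_subadditive[OF Ameas Ameas])
  also have "\<dots> \<le> ennreal (exp (- c)) + ennreal (exp (- c))"
    unfolding A_def by (intro add_mono tail_gen[OF sd Lm])
  also have "\<dots> = ennreal (2 * exp (- c))"
    by (simp add: ennreal_plus[symmetric] del: ennreal_plus)
  finally show ?thesis by (simp add: c_def)
qed


lemma Basis_real_vec: "(Basis :: (real^'n) set) = range (\<lambda>i. axis i 1)"
  by (auto simp: Basis_vec_def)

lemma nn_integral_vec_prod:
  fixes f :: "'n::finite \<Rightarrow> real \<Rightarrow> ennreal"
  assumes [measurable]: "\<And>i. f i \<in> borel_measurable borel"
  shows "(\<integral>\<^sup>+x. (\<Prod>i\<in>UNIV. f i (x $ i)) \<partial>(lborel :: (real^'n) measure)) = (\<Prod>i\<in>UNIV. \<integral>\<^sup>+x. f i x \<partial>lborel)"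
proof -
  define F where "F b = f (SOME i. b = axis i 1)" for b :: "real^'n"
  have inj: "inj (\<lambda>i::'n. axis i (1::real))"
    by (auto simp: inj_def axis_eq_axis)
  have Fax: "F (axis i 1) = f i" for i
  proof -
    have "(SOME k. axis i (1::real) = axis k 1) = i"
      by (rule some_equality) (auto simp: axis_eq_axis)
    then show ?thesis by (simp add: F_def)
  qed
  have eq1: "(\<Prod>b\<in>Basis. F b (x \<bullet> b)) = (\<Prod>i\<in>UNIV. f i (x $ i))" for x :: "real^'n"
    unfolding Basis_real_vec
    by (subst prod.reindex[OF inj]) (simp add: Fax inner_axis)
  have eq2: "(\<Prod>b\<in>Basis. \<integral>\<^sup>+x. F b x \<partial>lborel) = (\<Prod>i\<in>UNIV. \<integral>\<^sup>+x. f i x \<partial>lborel)"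
    unfolding Basis_real_vec
    by (subst prod.reindex[OF inj]) (simp add: Fax)
  have "(\<integral>\<^sup>+x. (\<Prod>b\<in>Basis. F b (x \<bullet> b)) \<partial>(lborel :: (real^'n) measure)) = (\<Prod>b\<in>Basis. \<integral>\<^sup>+x. F b x \<partial>lborel)"
    by (rule nn_integral_lborel_prod) (auto simp: Basis_real_vec Fax)
  then show ?thesis using eq1 eq2 by simp
qed

definition phi :: "('n::finite \<Rightarrow> real) \<Rightarrow> ('n \<Rightarrow> real) \<Rightarrow> real^'n \<Rightarrow> real" where
  "phi mu s x = (\<Prod>i\<in>UNIV. normal_density (mu i) (s i) (x $ i))"

lemma phi_nonneg: "phi mu s x \<ge> 0"
  by (simp add: phi_def prod_nonneg)

lemma phi_meas[measurable]: "phi mu s \<in> borel_measurable lborel"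
  unfolding phi_def by measurable

lemma nn_normal1:
  assumes s: "s > 0"
  shows "(\<integral>\<^sup>+y. ennreal (normal_density m s y) \<partial>lborel) = 1"
  using s by (subst nn_integral_eq_integral) auto

lemma nn_normal2:
  assumes s: "s > 0"
  shows "(\<integral>\<^sup>+y. ennreal (normal_density m s y * (y - m)^2) \<partial>lborel) = ennreal (s^2)"
proof -
  have "integrable lborel (\<lambda>y. normal_density m s y * (y - m)^2)"
    using integrable_normal_moment[OF s, of m 2] .
  moreover have "(\<integral>y. normal_density m s y * (y - m)^2 \<partial>lborel) = s^2"
    using integral_normal_moment_even[OF s, of m 1] by simp
  ultimately show ?thesis
    by (subst nn_integral_eq_integral) auto
qed

lemma phi_nn_integral:
  assumes s: "\<And>i. s i > 0"
  shows "(\<integral>\<^sup>+x. ennreal (phi mu s x) \<partial>lborel) = 1"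
proof -
  have "(\<integral>\<^sup>+x. ennreal (phi mu s x) \<partial>lborel) = (\<integral>\<^sup>+x. (\<Prod>i\<in>UNIV. ennreal (normal_density (mu i) (s i) (x $ i))) \<partial>lborel)"
    by (simp add: phi_def prod_ennreal)
  also have "\<dots> = (\<Prod>i\<in>UNIV. \<integral>\<^sup>+y. ennreal (normal_density (mu i) (s i) y) \<partial>lborel)"
    by (rule nn_integral_vec_prod) measurable
  also have "\<dots> = 1" by (simp add: nn_normal1[OF s])
  finally show ?thesis .
qed

lemma phi_nn_moment:
  assumes s: "\<And>i. s i > 0"
  shows "(\<integral>\<^sup>+x. ennreal (phi mu s x * (x $ k - mu k)^2) \<partial>lborel) = ennreal ((s k)^2)"
proof -
  define F where "F i y = (if i = k then ennreal (normal_density (mu i) (s i) y * (y - mu i)^2)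
      else ennreal (normal_density (mu i) (s i) y))" for i y
  have "phi mu s x * (x $ k - mu k)^2 = (\<Prod>i\<in>UNIV. (if i = k then normal_density (mu i) (s i) (x $ i) * (x $ i - mu i)^2
      else normal_density (mu i) (s i) (x $ i)))" for x
  proof -
    have "(\<Prod>i\<in>UNIV. (if i = k then normal_density (mu i) (s i) (x $ i) * (x $ i - mu i)^2
      else normal_density (mu i) (s i) (x $ i))) = normal_density (mu k) (s k) (x $ k) * (x $ k - mu k)^2 *
        (\<Prod>i\<in>UNIV-{k}. normal_density (mu i) (s i) (x $ i))"
      by (subst prod.remove[of _ k]) (auto intro!: prod.cong)
    moreover have "phi mu s x = normal_density (mu k) (s k) (x $ k) * (\<Prod>i\<in>UNIV-{k}. normal_density (mu i) (s i) (x $ i))"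
      unfolding phi_def by (subst prod.remove[of _ k]) auto
    ultimately show ?thesis by simp
  qed
  then have "(\<integral>\<^sup>+x. ennreal (phi mu s x * (x $ k - mu k)^2) \<partial>lborel) = (\<integral>\<^sup>+x. (\<Prod>i\<in>UNIV. F i (x $ i)) \<partial>lborel)"
    by (simp add: F_def prod_ennreal[symmetric] if_distrib)
  also have "\<dots> = (\<Prod>i\<in>UNIV. \<integral>\<^sup>+y. F i y \<partial>lborel)"
    by (rule nn_integral_vec_prod) (simp add: F_def)
  also have "\<dots> = (\<Prod>i\<in>UNIV. if i = k then ennreal ((s k)^2) else 1)"
    by (intro prod.cong refl) (simp add: F_def nn_normal1[OF s] nn_normal2[OF s])
  also have "\<dots> = ennreal ((s k)^2)"
    by (subst prod.remove[of _ k]) auto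
  finally show ?thesis .
qed

lemma phi_integrable: "(\<And>i. s i > 0) \<Longrightarrow> integrable lborel (phi mu s)"
  by (rule integrableI_nonneg) (auto simp: phi_nonneg phi_nn_integral)

lemma phi_integral: assumes s: "\<And>i. s i > 0" shows "(\<integral>x. phi mu s x \<partial>lborel) = 1"
  using phi_nn_integral[of s mu, OF s] phi_integrable[of s mu, OF s]
  by (subst (asm) nn_integral_eq_integral) (auto simp: phi_nonneg)

lemma phi_mom_integrable: "(\<And>i. s i > 0) \<Longrightarrow> integrable lborel (\<lambda>x. phi mu s x * (x $ k - mu k)^2)"
  by (rule integrableI_nonneg) (auto simp: phi_nonneg phi_nn_moment)

lemma phi_mom_integral: assumes s: "\<And>i. s i > 0" shows "(\<integral>x. phi mu s x * (x $ k - mu k)^2 \<partial>lborel) = (s k)^2"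
  using phi_nn_moment[of s mu k, OF s] phi_mom_integrable[of s mu k, OF s]
  by (subst (asm) nn_integral_eq_integral) (auto simp: phi_nonneg)


lemma measure_density_int:
  fixes g :: "'a::euclidean_space \<Rightarrow> real"
  assumes gi: "integrable lborel g" and gn: "\<And>x. g x \<ge> 0" and A: "A \<in> sets lborel"
  shows "measure (density lborel (\<lambda>x. ennreal (g x))) A = (\<integral>x. indicator A x * g x \<partial>lborel)"
proof -
  have gm[measurable]: "g \<in> borel_measurable lborel" using gi by auto
  have ii: "integrable lborel (\<lambda>x. indicator A x * g x)"
    using integrable_mult_indicator[OF A gi] by simp
  have "emeasure (density lborel (\<lambda>x. ennreal (g x))) A = (\<integral>\<^sup>+x. ennreal (g x) * indicator A x \<partial>lborel)"
    by (rule emeasure_density) (use A in auto)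
  also have "\<dots> = (\<integral>\<^sup>+x. ennreal (indicator A x * g x) \<partial>lborel)"
    by (intro nn_integral_cong) (auto split: split_indicator)
  also have "\<dots> = ennreal (\<integral>x. indicator A x * g x \<partial>lborel)"
    by (rule nn_integral_eq_integral[OF ii]) (auto simp: gn)
  finally show ?thesis
    by (simp add: measure_def integral_nonneg_AE gn)
qed

lemma tv_bound:
  fixes p :: "real^'n::finite \<Rightarrow> real" and f :: "real^'n \<Rightarrow> real"
  assumes pm: "p \<in> borel_measurable lborel" and pn: "\<And>x. p x \<ge> 0" and pM: "\<And>x. p x \<le> M"
    and fn: "\<And>x. f x \<ge> 0" and fi: "integrable lborel f" and f1: "(\<integral>x. f x \<partial>lborel) = 1"
    and p0: "p0 > 0" and e: "e > 0"
    and Dint: "integrable lborel (\<lambda>x. \<bar>p x - p0\<bar> * f x)"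
    and D: "(\<integral>x. \<bar>p x - p0\<bar> * f x \<partial>lborel) \<le> p0 * min e 1 / 8"
  shows "(\<integral>x. p x * f x \<partial>lborel) > 0"
    and "tv_dist (density lborel (\<lambda>x. ennreal (p x * f x / (\<integral>x. p x * f x \<partial>lborel))))
                 (density lborel (\<lambda>x. ennreal (f x))) \<le> e / 2"
proof -
  define c where "c = (\<integral>x. p x * f x \<partial>lborel)"
  define D where "D = (\<integral>x. \<bar>p x - p0\<bar> * f x \<partial>lborel)"
  have fm[measurable]: "f \<in> borel_measurable lborel" using fi by auto
  note pm[measurable]
  have pfi: "integrable lborel (\<lambda>x. p x * f x)"
  proof (rule Bochner_Integration.integrable_bound[OF integrable_mult_right[OF fi, of M]])
    show "(\<lambda>x. p x * f x) \<in> borel_measurable lborel" by measurable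
    show "AE x in lborel. norm (p x * f x) \<le> norm (M * f x)"
    proof (rule AE_I2)
      fix x
      have "p x * f x \<le> M * f x" using pM fn by (intro mult_right_mono) auto
      also have "\<dots> \<le> \<bar>M\<bar> * f x" using fn by (intro mult_right_mono) auto
      finally show "norm (p x * f x) \<le> norm (M * f x)" using pn fn by (simp add: abs_mult)
    qed
  qed
  have p0fi: "integrable lborel (\<lambda>x. p0 * f x)" using fi by auto
  have "c - p0 = (\<integral>x. (p x - p0) * f x \<partial>lborel)"
    using pfi p0fi f1 by (simp add: c_def left_diff_distrib)
  also have "\<bar>\<dots>\<bar> \<le> D" unfolding D_def
  proof (rule integral_abs_bound_integral)
    show "integrable lborel (\<lambda>x. (p x - p0) * f x)"
      using pfi p0fi by (simp add: left_diff_distrib)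
    show "\<bar>(p x - p0) * f x\<bar> \<le> \<bar>p x - p0\<bar> * f x" for x using fn[of x] by (simp add: abs_mult)
  qed (rule Dint)
  finally have cp0: "\<bar>c - p0\<bar> \<le> D" .
  have "p0 * min e 1 \<le> p0 * 1" by (rule mult_left_mono) (use p0 in auto)
  then have D0: "D \<le> p0 / 8" using D unfolding D_def by linarith
  have c2: "c \<ge> p0 / 2" using cp0 D0 by linarith
  then have "c > 0" using p0 by linarith
  then show "(\<integral>x. p x * f x \<partial>lborel) > 0" by (simp add: c_def)
  have cpos: "c > 0" using c2 p0 by linarith
  define g where "g x = p x * f x / c" for x
  have gi: "integrable lborel g" unfolding g_def using pfi by auto
  have gn: "g x \<ge> 0" for x unfolding g_def using pn fn cpos by auto
  define b where "b x = (\<bar>p x - p0\<bar> * f x + \<bar>p0 - c\<bar> * f x) / c" for x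
  have bi: "integrable lborel b" unfolding b_def using Dint fi by auto
  have bint: "(\<integral>x. b x \<partial>lborel) = (D + \<bar>p0 - c\<bar>) / c"
    unfolding b_def D_def using Dint fi f1 by simp
  have bbound: "(\<integral>x. b x \<partial>lborel) \<le> e / 2"
  proof -
    have "D + \<bar>p0 - c\<bar> \<le> 2 * D" using cp0 by simp
    also have "\<dots> \<le> p0 * min e 1 / 4" using D unfolding D_def by simp
    also have "\<dots> \<le> p0 * e / 4" using p0 by (simp add: mult_left_mono)
    finally have "(D + \<bar>p0 - c\<bar>) / c \<le> (p0 * e / 4) / c"
      using cpos by (intro divide_right_mono) auto
    also have "\<dots> \<le> (p0 * e / 4) / (p0 / 2)"
      using p0 e c2 by (intro divide_left_mono) auto
    also have "\<dots> = e / 2" using p0 by (simp add: field_simps)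
    finally show ?thesis using bint by simp
  qed
  have pw: "\<bar>g x - f x\<bar> \<le> b x" for x
  proof -
    have "g x - f x = (p x - c) * f x / c" unfolding g_def using cpos by (simp add: field_simps)
    then have "\<bar>g x - f x\<bar> = \<bar>p x - c\<bar> * f x / c" using fn cpos by (simp add: abs_mult)
    also have "\<dots> \<le> (\<bar>p x - p0\<bar> + \<bar>p0 - c\<bar>) * f x / c"
      using fn cpos by (intro divide_right_mono mult_right_mono) auto
    finally show ?thesis unfolding b_def by (simp add: algebra_simps)
  qed
  show "tv_dist (density lborel (\<lambda>x. ennreal (p x * f x / (\<integral>x. p x * f x \<partial>lborel))))
                 (density lborel (\<lambda>x. ennreal (f x))) \<le> e / 2"
    unfolding tv_dist_def
  proof (rule cSUP_least)
    show "sets (density lborel (\<lambda>x. ennreal (p x * f x / (\<integral>x. p x * f x \<partial>lborel)))) \<noteq> {}" by auto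
    fix A assume "A \<in> sets (density lborel (\<lambda>x. ennreal (p x * f x / (\<integral>x. p x * f x \<partial>lborel))))"
    then have A: "A \<in> sets lborel" by simp
    have m1: "measure (density lborel (\<lambda>x. ennreal (p x * f x / (\<integral>x. p x * f x \<partial>lborel)))) A
        = (\<integral>x. indicator A x * g x \<partial>lborel)"
      using measure_density_int[OF gi gn A] by (simp add: g_def c_def)
    have m2: "measure (density lborel (\<lambda>x. ennreal (f x))) A = (\<integral>x. indicator A x * f x \<partial>lborel)"
      using measure_density_int[OF fi fn A] .
    have i1: "integrable lborel (\<lambda>x. indicator A x * g x)"
      using integrable_mult_indicator[OF A gi] by simp
    have i2: "integrable lborel (\<lambda>x. indicator A x * f x)"
      using integrable_mult_indicator[OF A fi] by simp
    have "\<bar>(\<integral>x. indicator A x * g x \<partial>lborel) - (\<integral>x. indicator A x * f x \<partial>lborel)\<bar>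
        = \<bar>\<integral>x. indicator A x * g x - indicator A x * f x \<partial>lborel\<bar>"
      using i1 i2 by simp
    also have "\<dots> \<le> (\<integral>x. b x \<partial>lborel)"
      by (rule integral_abs_bound_integral) (use i1 i2 bi pw in \<open>auto split: split_indicator intro: order_trans[OF abs_ge_zero pw]\<close>)
    also have "\<dots> \<le> e / 2" by (rule bbound)
    finally show "\<bar>measure (density lborel (\<lambda>x. ennreal (p x * f x / (\<integral>x. p x * f x \<partial>lborel)))) A
        - measure (density lborel (\<lambda>x. ennreal (f x))) A\<bar> \<le> e / 2"
      using m1 m2 by simp
  qed
qed


lemma arm_sq:
  fixes h :: "nat \<Rightarrow> 'p \<times> real" and m :: nat and i :: 'p and b :: real
  defines "N \<equiv> real (arm_count m h i)"
    and "S \<equiv> (\<Sum>k<m. if fst (h k) = i then snd (h k) else 0)"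
    and "Q \<equiv> (\<Sum>k<m. if fst (h k) = i then (snd (h k))^2 else 0)"
  shows "(\<Sum>k<m. if fst (h k) = i then (snd (h k) - b)^2 else 0) = Q - 2 * b * S + b^2 * N"
proof -
  have cnt: "N = (\<Sum>k<m. if fst (h k) = i then 1 else 0)"
  proof -
    have "(\<Sum>k<m. if fst (h k) = i then 1 else 0 :: real) = (\<Sum>k\<in>{k\<in>{..<m}. fst (h k) = i}. 1)"
      by (rule sum.inter_filter[symmetric]) simp
    also have "{k\<in>{..<m}. fst (h k) = i} = {j. j < m \<and> fst (h j) = i}" by auto
    finally show ?thesis by (simp add: arm_count_def N_def)
  qed
  have "(\<Sum>k<m. if fst (h k) = i then (snd (h k) - b)^2 else 0)
      = (\<Sum>k<m. (if fst (h k) = i then (snd (h k))^2 else 0) - 2 * b * (if fst (h k) = i then snd (h k) else 0)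
           + b^2 * (if fst (h k) = i then 1 else 0))"
    by (intro sum.cong) (auto simp: power2_eq_square algebra_simps)
  also have "\<dots> = Q - 2 * b * S + b^2 * N"
    by (simp add: sum.distrib sum_subtractf sum_distrib_left[symmetric] Q_def S_def cnt)
  finally show ?thesis .
qed

lemma arm_factor:
  fixes h :: "nat \<Rightarrow> 'p \<times> real" and sd :: "'p \<Rightarrow> real" and m :: nat and i :: 'p
  assumes sd: "sd i > 0" and N: "arm_count m h i > 0"
  defines "s \<equiv> sd i / sqrt (real (arm_count m h i))"
  shows "\<exists>c>0. \<forall>b. exp (- (\<Sum>k<m. if fst (h k) = i then (snd (h k) - b)^2 / (2 * (sd i)^2) else 0))
       = c * normal_density (sample_mean m h i) s b"
proof -
  define NN where "NN = real (arm_count m h i)"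
  define S where "S = (\<Sum>k<m. if fst (h k) = i then snd (h k) else 0)"
  define Q where "Q = (\<Sum>k<m. if fst (h k) = i then (snd (h k))^2 else 0)"
  define R where "R = Q - S^2 / NN"
  have NN: "NN > 0" using N by (simp add: NN_def)
  have mu: "sample_mean m h i = S / NN" by (simp add: sample_mean_def S_def NN_def)
  have s2: "s^2 = (sd i)^2 / NN" using NN by (simp add: s_def NN_def power_divide)
  have spos: "s > 0" using sd NN by (simp add: s_def NN_def)
  define c where "c = sqrt (2 * pi * s^2) * exp (- R / (2 * (sd i)^2))"
  have cpos: "c > 0" using spos by (simp add: c_def)
  have "exp (- (\<Sum>k<m. if fst (h k) = i then (snd (h k) - b)^2 / (2 * (sd i)^2) else 0))
       = c * normal_density (sample_mean m h i) s b" for b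
  proof -
    have "(\<Sum>k<m. if fst (h k) = i then (snd (h k) - b)^2 / (2 * (sd i)^2) else 0)
        = (\<Sum>k<m. if fst (h k) = i then (snd (h k) - b)^2 else 0) / (2 * (sd i)^2)"
      unfolding sum_divide_distrib by (intro sum.cong) auto
    also have "\<dots> = (Q - 2 * b * S + b^2 * NN) / (2 * (sd i)^2)"
      by (simp add: arm_sq Q_def S_def NN_def)
    also have "\<dots> = (b - S / NN)^2 / (2 * s^2) + R / (2 * (sd i)^2)"
    proof -
      have e1: "(b - S/NN)^2 * NN = b^2*NN - 2*b*S + S^2/NN"
        using NN by (simp add: power2_eq_square field_simps)
      have e2: "(b - S/NN)^2 / (2 * s^2) = (b - S/NN)^2 * NN / (2 * (sd i)^2)"
        using NN sd unfolding s2 by simp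
      show ?thesis unfolding e2 e1 R_def
        by (simp add: add_divide_distrib[symmetric] diff_divide_distrib[symmetric])
    qed
    finally have e: "(\<Sum>k<m. if fst (h k) = i then (snd (h k) - b)^2 / (2 * (sd i)^2) else 0)
        = (b - S / NN)^2 / (2 * s^2) + R / (2 * (sd i)^2)" .
    have sq: "sqrt (2 * pi * s^2) > 0" using spos by simp
    have "c * normal_density (S / NN) s b = exp (- R / (2 * (sd i)^2)) * exp (-(b - S / NN)\<^sup>2 / (2 * s\<^sup>2))"
      unfolding c_def normal_density_def using sq spos by simp
    also have "\<dots> = exp (- ((b - S / NN)^2 / (2 * s^2) + R / (2 * (sd i)^2)))"
      by (simp add: exp_add[symmetric])
    finally show ?thesis unfolding e mu by simp
  qed
  then show ?thesis using cpos by blast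
qed

lemma likelihood_factor:
  fixes h :: "nat \<Rightarrow> 'p::finite \<times> real" and sd :: "'p \<Rightarrow> real"
  assumes sd: "\<And>i. sd i > 0" and N: "\<And>i. arm_count m h i > 0"
  shows "\<exists>C>0. \<forall>\<beta>. likelihood sd m h \<beta> =
     C * phi (sample_mean m h) (\<lambda>i. sd i / sqrt (real (arm_count m h i))) \<beta>"
proof -
  have "\<forall>i. \<exists>c>0. \<forall>b. exp (- (\<Sum>k<m. if fst (h k) = i then (snd (h k) - b)^2 / (2 * (sd i)^2) else 0))
       = c * normal_density (sample_mean m h i) (sd i / sqrt (real (arm_count m h i))) b"
  proof
    fix i
    show "\<exists>c>0. \<forall>b. exp (- (\<Sum>k<m. if fst (h k) = i then (snd (h k) - b)^2 / (2 * (sd i)^2) else 0))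
       = c * normal_density (sample_mean m h i) (sd i / sqrt (real (arm_count m h i))) b"
      using arm_factor[where sd=sd and i=i and m=m and h=h, OF sd[of i] N[of i]] by simp
  qed
  then have "\<exists>c. \<forall>i. c i > 0 \<and> (\<forall>b. exp (- (\<Sum>k<m. if fst (h k) = i then (snd (h k) - b)^2 / (2 * (sd i)^2) else 0))
       = c i * normal_density (sample_mean m h i) (sd i / sqrt (real (arm_count m h i))) b)"
    by (rule choice)
  then obtain c where cc: "\<forall>i. c i > 0 \<and> (\<forall>b. exp (- (\<Sum>k<m. if fst (h k) = i then (snd (h k) - b)^2 / (2 * (sd i)^2) else 0))
       = c i * normal_density (sample_mean m h i) (sd i / sqrt (real (arm_count m h i))) b)"
    by blast
  have c: "\<And>i. c i > 0" using cc by blast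
  have ceq: "\<And>i b. exp (- (\<Sum>k<m. if fst (h k) = i then (snd (h k) - b)^2 / (2 * (sd i)^2) else 0))
       = c i * normal_density (sample_mean m h i) (sd i / sqrt (real (arm_count m h i))) b"
    using cc by blast
  have "likelihood sd m h \<beta> = (\<Prod>i\<in>UNIV. c i) * phi (sample_mean m h) (\<lambda>i. sd i / sqrt (real (arm_count m h i))) \<beta>" for \<beta>
  proof -
    have "likelihood sd m h \<beta> = exp (- (\<Sum>k<m. (snd (h k) - \<beta> $ fst (h k))\<^sup>2 / (2 * (sd (fst (h k)))\<^sup>2)))"
      unfolding likelihood_def by (simp add: exp_sum[symmetric] sum_negf[symmetric])
    also have "(\<Sum>k<m. (snd (h k) - \<beta> $ fst (h k))\<^sup>2 / (2 * (sd (fst (h k)))\<^sup>2))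
        = (\<Sum>k<m. \<Sum>i\<in>UNIV. if fst (h k) = i then (snd (h k) - \<beta> $ i)^2 / (2 * (sd i)^2) else 0)"
      by (intro sum.cong refl) (simp add: sum.delta)
    also have "\<dots> = (\<Sum>i\<in>UNIV. \<Sum>k<m. if fst (h k) = i then (snd (h k) - \<beta> $ i)^2 / (2 * (sd i)^2) else 0)"
      by (rule sum.swap)
    also have "exp (- \<dots>) = (\<Prod>i\<in>UNIV. exp (- (\<Sum>k<m. if fst (h k) = i then (snd (h k) - \<beta> $ i)^2 / (2 * (sd i)^2) else 0)))"
      by (simp add: exp_sum[symmetric] sum_negf)
    also have "\<dots> = (\<Prod>i\<in>UNIV. c i * normal_density (sample_mean m h i) (sd i / sqrt (real (arm_count m h i))) (\<beta> $ i))"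
      by (simp add: ceq)
    also have "\<dots> = (\<Prod>i\<in>UNIV. c i) * phi (sample_mean m h) (\<lambda>i. sd i / sqrt (real (arm_count m h i))) \<beta>"
      by (simp add: prod.distrib phi_def)
    finally show ?thesis .
  qed
  moreover have "(\<Prod>i\<in>UNIV. c i) > 0" using c by (simp add: prod_pos)
  ultimately show ?thesis by blast
qed


lemma bvm_det:
  fixes \<pi> :: "real^'p::finite \<Rightarrow> real" and \<beta>0 :: "real^'p" and sd :: "'p \<Rightarrow> real"
  assumes sd: "\<And>i. sd i > 0" and pn: "\<And>\<beta>. \<pi> \<beta> \<ge> 0" and pc: "continuous_on UNIV \<pi>"
    and pb: "bounded (range \<pi>)" and pp: "\<pi> \<beta>0 > 0" and e: "e > 0"
  shows "\<exists>r>0. \<exists>K>0. \<forall>m h. (\<forall>i. K \<le> real (arm_count m h i) \<and> \<bar>sample_mean m h i - \<beta>0 $ i\<bar> < r)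
     \<longrightarrow> tv_dist (posterior \<pi> sd m h) (gauss_approx sd m h) \<le> e / 2"
proof -
  define p0 where "p0 = \<pi> \<beta>0"
  have p0: "p0 > 0" using pp by (simp add: p0_def)
  obtain M where M: "\<And>x. \<pi> x \<le> M"
    using pb unfolding bounded_iff by (metis abs_le_D1 rangeI real_norm_def)
  have M0: "p0 \<le> M" using M by (simp add: p0_def)
  have pm[measurable]: "\<pi> \<in> borel_measurable lborel"
    using borel_measurable_continuous_onI[OF pc] by simp
  define \<eta> where "\<eta> = p0 * min e 1 / 16"
  have eta: "\<eta> > 0" using p0 e by (simp add: \<eta>_def)
  obtain \<rho> where rho: "\<rho> > 0" and rhoP: "\<And>x. dist x \<beta>0 < \<rho> \<Longrightarrow> \<bar>\<pi> x - p0\<bar> < \<eta>"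
    using pc eta unfolding continuous_on_iff p0_def dist_real_def by (metis UNIV_I)
  define n where "n = real CARD('p)"
  have n: "n \<ge> 1" by (simp add: n_def Suc_le_eq)
  define r where "r = \<rho> / (2 * n)"
  have r: "r > 0" using rho n by (simp add: r_def)
  define S2 where "S2 = (\<Sum>i\<in>UNIV. (sd i)^2)"
  have S2: "S2 \<ge> 0" by (simp add: S2_def sum_nonneg)
  define K where "K = M * S2 / (r^2 * \<eta>) + 1"
  have K0: "M * S2 / (r^2 * \<eta>) \<ge> 0" using M0 p0 S2 r eta by simp
  have K: "K > 0" using K0 by (simp add: K_def)
  have KK: "M * S2 \<le> \<eta> * r^2 * K"
  proof -
    have "M * S2 = (M * S2 / (r^2 * \<eta>)) * (r^2 * \<eta>)" using r eta by simp
    also have "\<dots> \<le> K * (r^2 * \<eta>)" using r eta by (intro mult_right_mono) (auto simp: K_def)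
    finally show ?thesis by (simp add: mult_ac)
  qed
  show ?thesis
  proof (rule exI[of _ r], intro conjI r, rule exI[of _ K], intro conjI K allI impI)
    fix m h
    assume H: "\<forall>i. K \<le> real (arm_count m h i) \<and> \<bar>sample_mean m h i - \<beta>0 $ i\<bar> < r"
    have Npos: "arm_count m h i > 0" for i using H K by (metis of_nat_0_less_iff order_less_le_trans)
    define mu where "mu = sample_mean m h"
    define s where "s i = sd i / sqrt (real (arm_count m h i))" for i
    have spos: "s i > 0" for i using sd Npos by (simp add: s_def)
    obtain C where C: "C > 0" and Ceq: "\<And>\<beta>. likelihood sd m h \<beta> = C * phi mu s \<beta>"
      using likelihood_factor[where sd=sd and m=m and h=h, OF sd Npos] by (auto simp: mu_def s_def[abs_def])
    define f where "f = phi mu s"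
    have fn: "f x \<ge> 0" for x by (simp add: f_def phi_nonneg)
    have fi: "integrable lborel f" unfolding f_def by (rule phi_integrable[OF spos])
    have f1: "(\<integral>x. f x \<partial>lborel) = 1" unfolding f_def by (rule phi_integral[OF spos])
    have fm[measurable]: "f \<in> borel_measurable lborel" using fi by auto
    have pw: "\<bar>\<pi> x - p0\<bar> \<le> \<eta> + (M / r^2) * (\<Sum>i\<in>UNIV. (x $ i - mu i)^2)" for x
    proof (cases "\<forall>i. \<bar>x $ i - mu i\<bar> < r")
      case True
      have "\<bar>x $ i - \<beta>0 $ i\<bar> < 2 * r" for i
        using True[rule_format, of i] H[rule_format, of i] unfolding mu_def by linarith
      then have "(\<Sum>i\<in>UNIV. \<bar>(x - \<beta>0) $ i\<bar>) < (\<Sum>i\<in>(UNIV::'p set). 2 * r)"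
        by (intro sum_strict_mono) auto
      also have "\<dots> = \<rho>" using n by (simp add: r_def n_def)
      finally have "dist x \<beta>0 < \<rho>"
        using norm_le_l1_cart[of "x - \<beta>0"] by (simp add: dist_norm)
      then have "\<bar>\<pi> x - p0\<bar> < \<eta>" by (rule rhoP)
      moreover have "0 \<le> (M / r^2) * (\<Sum>i\<in>UNIV. (x $ i - mu i)^2)"
        using M0 p0 by (intro mult_nonneg_nonneg sum_nonneg) auto
      ultimately show ?thesis by linarith
    next
      case False
      then obtain i where i: "r \<le> \<bar>x $ i - mu i\<bar>" by (auto simp: not_less)
      have "r^2 \<le> (x $ i - mu i)^2"
        using power_mono[OF i, of 2] r by simp
      also have "\<dots> \<le> (\<Sum>i\<in>UNIV. (x $ i - mu i)^2)"
        by (rule member_le_sum) auto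
      finally have "M \<le> (M / r^2) * (\<Sum>i\<in>UNIV. (x $ i - mu i)^2)"
        using r M0 p0 by (simp add: field_simps mult_left_mono)
      moreover have "\<bar>\<pi> x - p0\<bar> \<le> M" using M[of x] pn[of x] M0 p0 by linarith
      ultimately show ?thesis using eta by linarith
    qed
    have Dint: "integrable lborel (\<lambda>x. \<bar>\<pi> x - p0\<bar> * f x)"
    proof (rule Bochner_Integration.integrable_bound[OF integrable_mult_right[OF fi, of "M + p0"]])
      show "(\<lambda>x. \<bar>\<pi> x - p0\<bar> * f x) \<in> borel_measurable lborel" by measurable
      show "AE x in lborel. norm (\<bar>\<pi> x - p0\<bar> * f x) \<le> norm ((M + p0) * f x)"
      proof (rule AE_I2)
        fix x
        have "\<bar>\<pi> x - p0\<bar> \<le> M + p0" using M[of x] pn[of x] p0 by linarith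
        then have "\<bar>\<pi> x - p0\<bar> * f x \<le> (M + p0) * f x" using fn by (intro mult_right_mono) auto
        then show "norm (\<bar>\<pi> x - p0\<bar> * f x) \<le> norm ((M + p0) * f x)"
          using fn p0 M0 by (simp add: abs_mult)
      qed
    qed
    have mi: "integrable lborel (\<lambda>x. f x * (x $ i - mu i)^2)" for i
      unfolding f_def by (rule phi_mom_integrable[OF spos])
    have RHSi: "integrable lborel (\<lambda>x. \<eta> * f x + (M / r^2) * (\<Sum>i\<in>UNIV. f x * (x $ i - mu i)^2))"
      using fi mi by (intro Bochner_Integration.integrable_add integrable_mult_right Bochner_Integration.integrable_sum) auto
    have "(\<integral>x. \<bar>\<pi> x - p0\<bar> * f x \<partial>lborel) \<le> (\<integral>x. \<eta> * f x + (M / r^2) * (\<Sum>i\<in>UNIV. f x * (x $ i - mu i)^2) \<partial>lborel)"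
    proof (rule integral_mono[OF Dint RHSi])
      fix x
      have "\<bar>\<pi> x - p0\<bar> * f x \<le> (\<eta> + (M / r^2) * (\<Sum>i\<in>UNIV. (x $ i - mu i)^2)) * f x"
        using pw[of x] fn[of x] by (intro mult_right_mono) auto
      also have "\<dots> = \<eta> * f x + (M / r^2) * (\<Sum>i\<in>UNIV. f x * (x $ i - mu i)^2)"
        by (simp add: algebra_simps sum_distrib_left sum_distrib_right)
      finally show "\<bar>\<pi> x - p0\<bar> * f x \<le> \<eta> * f x + (M / r^2) * (\<Sum>i\<in>UNIV. f x * (x $ i - mu i)^2)" .
    qed
    also have "\<dots> = \<eta> + (M / r^2) * (\<Sum>i\<in>UNIV. (s i)^2)"
    proof -
      have "(\<integral>x. (\<Sum>i\<in>UNIV. f x * (x $ i - mu i)^2) \<partial>lborel) = (\<Sum>i\<in>UNIV. (s i)^2)"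
        using mi by (simp add: integral_sum f_def phi_mom_integral[where s=s, OF spos])
      then show ?thesis
        using fi mi f1 by (simp add: integrable_sum)
    qed
    also have "\<dots> \<le> 2 * \<eta>"
    proof -
      have "(\<Sum>i\<in>UNIV. (s i)^2) \<le> (\<Sum>i\<in>UNIV. (sd i)^2 / K)"
      proof (rule sum_mono)
        fix i
        have "(s i)^2 = (sd i)^2 / real (arm_count m h i)"
          using Npos[of i] by (simp add: s_def power_divide)
        also have "\<dots> \<le> (sd i)^2 / K"
          using H K Npos[of i] by (intro divide_left_mono) auto
        finally show "(s i)^2 \<le> (sd i)^2 / K" .
      qed
      also have "\<dots> = S2 / K" by (simp add: S2_def sum_divide_distrib)
      finally have ss: "(\<Sum>i\<in>UNIV. (s i)^2) \<le> S2 / K" .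
      have "(M / r^2) * (\<Sum>i\<in>UNIV. (s i)^2) \<le> (M / r^2) * (S2 / K)"
        using ss M0 p0 r by (intro mult_left_mono) auto
      also have "\<dots> = (M * S2) / (r^2 * K)" by simp
      also have "\<dots> \<le> (\<eta> * r^2 * K) / (r^2 * K)"
        using KK r K by (intro divide_right_mono) auto
      also have "\<dots> = \<eta>" using r K by simp
      finally show ?thesis by simp
    qed
    also have "\<dots> = p0 * min e 1 / 8" by (simp add: \<eta>_def)
    finally have D: "(\<integral>x. \<bar>\<pi> x - p0\<bar> * f x \<partial>lborel) \<le> p0 * min e 1 / 8" .
    note TV = tv_bound[OF pm pn M fn fi f1 p0 e Dint D]
    have post: "posterior \<pi> sd m h = density lborel (\<lambda>x. ennreal (\<pi> x * f x / (\<integral>x. \<pi> x * f x \<partial>lborel)))"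
    proof -
      have "(\<integral>b. \<pi> b * likelihood sd m h b \<partial>lborel) = C * (\<integral>b. \<pi> b * f b \<partial>lborel)"
        by (simp add: Ceq f_def mult.left_commute)
      then show ?thesis
        unfolding posterior_def using C by (simp add: Ceq f_def mult.left_commute)
    qed
    have gauss: "gauss_approx sd m h = density lborel (\<lambda>x. ennreal (f x))"
      by (simp add: gauss_approx_def f_def phi_def mu_def s_def)
    show "tv_dist (posterior \<pi> sd m h) (gauss_approx sd m h) \<le> e / 2"
      unfolding post gauss using TV(2) by simp
  qed
qed


theorem mainTheorem9:
  fixes \<Lambda> :: "nat \<Rightarrow> nat \<Rightarrow> (nat \<Rightarrow> 'p::finite \<times> real) \<Rightarrow> 'p pmf"
    and m :: "nat \<Rightarrow> nat"
    and \<beta>0 :: "real^'p"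
    and \<sigma> :: "'p \<Rightarrow> real"
    and \<pi> :: "real^'p \<Rightarrow> real"
  assumes sigma_pos: "\<And>i. \<sigma> i > 0"
    and Lambda_meas: "\<And>n j a. (\<lambda>h. pmf (\<Lambda> n j h) a) \<in> borel_measurable (hist_space j)"
    and min_count: "\<And>K::real. (\<lambda>n. measure (traj (\<Lambda> n) (\<lambda>i. \<beta>0 $ i) \<sigma> (m n))
             {h \<in> space (traj (\<Lambda> n) (\<lambda>i. \<beta>0 $ i) \<sigma> (m n)).
                (MIN i. real (arm_count (m n) h i)) \<le> K}) \<longlonglongrightarrow> 0"
    and prior_nonneg: "\<And>\<beta>. \<pi> \<beta> \<ge> 0"
    and prior_density: "(\<integral>\<^sup>+ \<beta>. ennreal (\<pi> \<beta>) \<partial>lborel) = 1"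
    and prior_cont: "continuous_on UNIV \<pi>"
    and prior_bounded: "bounded (range \<pi>)"
    and prior_pos: "\<pi> \<beta>0 > 0"
  shows "\<And>\<epsilon> \<delta>. \<epsilon> > 0 \<Longrightarrow> \<delta> > 0 \<Longrightarrow> eventually (\<lambda>n.
            \<exists>B \<in> sets (traj (\<Lambda> n) (\<lambda>i. \<beta>0 $ i) \<sigma> (m n)).
              {h \<in> space (traj (\<Lambda> n) (\<lambda>i. \<beta>0 $ i) \<sigma> (m n)).
                 tv_dist (posterior \<pi> \<sigma> (m n) h) (gauss_approx \<sigma> (m n) h) > \<epsilon>} \<subseteq> B
              \<and> measure (traj (\<Lambda> n) (\<lambda>i. \<beta>0 $ i) \<sigma> (m n)) B < \<delta>) sequentially"
proof -
  fix \<epsilon> \<delta> :: real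
  assume eps: "\<epsilon> > 0" and del: "\<delta> > 0"
  let ?M = "\<lambda>n. traj (\<Lambda> n) (\<lambda>i. \<beta>0 $ i) \<sigma> (m n)"
  obtain r K where r: "r > 0" and K: "K > 0" and det: "\<And>mm h. (\<forall>i. K \<le> real (arm_count mm h i) \<and> \<bar>sample_mean mm h i - \<beta>0 $ i\<bar> < r)
     \<Longrightarrow> tv_dist (posterior \<pi> \<sigma> mm h) (gauss_approx \<sigma> mm h) \<le> \<epsilon> / 2"
    using bvm_det[where sd=\<sigma> and \<pi>=\<pi>, OF sigma_pos prior_nonneg prior_cont prior_bounded prior_pos eps]
    by blast
  define S2 where "S2 = (\<Sum>i\<in>(UNIV::'p set). (\<sigma> i)^2)"
  have S2: "S2 > 0" unfolding S2_def
  proof (rule sum_pos)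
    fix i :: 'p show "0 < (\<sigma> i)^2" using sigma_pos[of i] by simp
  qed auto
  define K2 where "K2 = max K (8 * S2 / (r^2 * \<delta>)) + 1"
  have K2K: "K \<le> K2" and K2pos: "K2 > 0" and K2big: "8 * S2 / (r^2 * \<delta>) < K2"
    using K by (auto simp: K2_def)
  have small: "4 * S2 / (r^2 * K2) < \<delta> / 2"
  proof -
    have "8 * S2 < K2 * (r^2 * \<delta>)" using K2big r del by (simp add: divide_less_eq)
    then show ?thesis using r K2pos del by (simp add: divide_less_eq field_simps)
  qed
  have sets_eq: "sets (?M n) = sets (hist_space (m n))" for n
    using traj_prob(2)[where L="\<Lambda> n" and sd=\<sigma>, OF sigma_pos Lambda_meas] .
  have space_eq: "space (?M n) = space (hist_space (m n))" for n
    using traj_prob(3)[where L="\<Lambda> n" and sd=\<sigma>, OF sigma_pos Lambda_meas] .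
  have probM: "prob_space (?M n)" for n
    using traj_prob(1)[where L="\<Lambda> n" and sd=\<sigma>, OF sigma_pos Lambda_meas] .
  have measN[measurable]: "(\<lambda>h. real (arm_count (m n) h i)) \<in> borel_measurable (?M n)" for n i
    using meas_stats(1) by (simp add: measurable_cong_sets[OF sets_eq refl])
  have measS[measurable]: "(\<lambda>h. sample_mean (m n) h i) \<in> borel_measurable (?M n)" for n i
    using meas_stats(3) by (simp add: measurable_cong_sets[OF sets_eq refl])
  define B2 where "B2 n i = {h \<in> space (?M n). K2 \<le> real (arm_count (m n) h i) \<and> r \<le> \<bar>sample_mean (m n) h i - \<beta>0 $ i\<bar>}" for n i
  have B2m: "B2 n i \<in> sets (?M n)" for n i unfolding B2_def by measurable
  have B2le: "measure (?M n) (B2 n i) \<le> 4 * (\<sigma> i)^2 / (r^2 * K2)" for n i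
  proof -
    interpret P: prob_space "?M n" by (rule probM)
    have "emeasure (?M n) (B2 n i) \<le> ennreal (2 * exp (- (r^2 * K2 / (2 * (\<sigma> i)^2))))"
      unfolding B2_def by (rule tail_dev[where L="\<Lambda> n" and sd=\<sigma>, OF sigma_pos Lambda_meas r K2pos])
    then have "measure (?M n) (B2 n i) \<le> 2 * exp (- (r^2 * K2 / (2 * (\<sigma> i)^2)))"
      by (simp add: P.emeasure_eq_measure)
    also have "\<dots> \<le> 2 * (1 / (r^2 * K2 / (2 * (\<sigma> i)^2)))"
    proof -
      define x where "x = r^2 * K2 / (2 * (\<sigma> i)^2)"
      have x: "x > 0" using r K2pos sigma_pos[of i] by (simp add: x_def)
      have "x \<le> exp x" using exp_ge_add_one_self[of x] by linarith
      then have "exp (- x) \<le> 1 / x" using x by (simp add: exp_minus field_simps)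
      then show ?thesis by (simp add: x_def)
    qed
    also have "\<dots> = 4 * (\<sigma> i)^2 / (r^2 * K2)" using r K2pos sigma_pos[of i] by (simp add: field_simps)
    finally show ?thesis .
  qed
  have ev: "eventually (\<lambda>n. measure (?M n) {h \<in> space (?M n). (MIN i. real (arm_count (m n) h i)) \<le> K2} < \<delta> / 2) sequentially"
    using order_tendstoD(2)[OF min_count[of K2], of "\<delta> / 2"] del by simp
  show "eventually (\<lambda>n.
            \<exists>B \<in> sets (traj (\<Lambda> n) (\<lambda>i. \<beta>0 $ i) \<sigma> (m n)).
              {h \<in> space (traj (\<Lambda> n) (\<lambda>i. \<beta>0 $ i) \<sigma> (m n)).
                 tv_dist (posterior \<pi> \<sigma> (m n) h) (gauss_approx \<sigma> (m n) h) > \<epsilon>} \<subseteq> B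
              \<and> measure (traj (\<Lambda> n) (\<lambda>i. \<beta>0 $ i) \<sigma> (m n)) B < \<delta>) sequentially"
  proof (rule eventually_mono[OF ev])
    fix n
    assume n: "measure (?M n) {h \<in> space (?M n). (MIN i. real (arm_count (m n) h i)) \<le> K2} < \<delta> / 2"
    interpret P: prob_space "?M n" by (rule probM)
    define B1 where "B1 = {h \<in> space (?M n). (MIN i. real (arm_count (m n) h i)) \<le> K2}"
    have B1eq: "B1 = {h \<in> space (?M n). \<exists>i. real (arm_count (m n) h i) \<le> K2}"
      unfolding B1_def by (auto simp: Min_le_iff)
    have B1m: "B1 \<in> sets (?M n)" unfolding B1eq by measurable
    define B where "B = B1 \<union> (\<Union>i\<in>UNIV. B2 n i)"
    have Bm: "B \<in> sets (?M n)" unfolding B_def using B1m B2m by auto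
    have sub: "{h \<in> space (?M n). tv_dist (posterior \<pi> \<sigma> (m n) h) (gauss_approx \<sigma> (m n) h) > \<epsilon>} \<subseteq> B"
    proof
      fix h assume h: "h \<in> {h \<in> space (?M n). tv_dist (posterior \<pi> \<sigma> (m n) h) (gauss_approx \<sigma> (m n) h) > \<epsilon>}"
      show "h \<in> B"
      proof (rule ccontr)
        assume "h \<notin> B"
        then have nb1: "h \<notin> B1" and nb2: "\<And>i. h \<notin> B2 n i" by (auto simp: B_def)
        have hs: "h \<in> space (?M n)" using h by simp
        have "K \<le> real (arm_count (m n) h i) \<and> \<bar>sample_mean (m n) h i - \<beta>0 $ i\<bar> < r" for i
        proof -
          have "\<not> real (arm_count (m n) h i) \<le> K2" using nb1 hs unfolding B1eq by auto
          then have "K2 < real (arm_count (m n) h i)" by simp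
          moreover have "\<not> (K2 \<le> real (arm_count (m n) h i) \<and> r \<le> \<bar>sample_mean (m n) h i - \<beta>0 $ i\<bar>)"
            using nb2[of i] hs unfolding B2_def by auto
          ultimately show ?thesis using K2K by auto
        qed
        then have "tv_dist (posterior \<pi> \<sigma> (m n) h) (gauss_approx \<sigma> (m n) h) \<le> \<epsilon> / 2"
          by (intro det) auto
        then show False using h eps by auto
      qed
    qed
    have "measure (?M n) B \<le> measure (?M n) B1 + measure (?M n) (\<Union>i\<in>UNIV. B2 n i)"
      unfolding B_def by (rule measure_Un_le) (use B1m B2m in auto)
    also have "measure (?M n) (\<Union>i\<in>UNIV. B2 n i) \<le> (\<Sum>i\<in>UNIV. measure (?M n) (B2 n i))"
      by (rule measure_UNION_le) (use B2m in auto)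
    also have "\<dots> \<le> (\<Sum>i\<in>UNIV. 4 * (\<sigma> i)^2 / (r^2 * K2))"
      by (rule sum_mono) (rule B2le)
    also have "\<dots> = 4 * S2 / (r^2 * K2)"
      by (simp add: S2_def sum_divide_distrib[symmetric] sum_distrib_left)
    finally have "measure (?M n) B < \<delta>"
      using n small unfolding B1_def by linarith
    then show "\<exists>B \<in> sets (traj (\<Lambda> n) (\<lambda>i. \<beta>0 $ i) \<sigma> (m n)).
              {h \<in> space (traj (\<Lambda> n) (\<lambda>i. \<beta>0 $ i) \<sigma> (m n)).
                 tv_dist (posterior \<pi> \<sigma> (m n) h) (gauss_approx \<sigma> (m n) h) > \<epsilon>} \<subseteq> B
              \<and> measure (traj (\<Lambda> n) (\<lambda>i. \<beta>0 $ i) \<sigma> (m n)) B < \<delta>"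
      using Bm sub by blast
  qed
qed


end
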